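(* Let $p>1$ and let $f:\mathbb{R}^n\times[0,\infty)\to(0,\infty)$ be a smooth positive solution of $\frac{\partial f}{\partial t}=\Delta f+f^p$. Set $u=\log f$. Let $\alpha,\beta,c\in\mathbb{R}$ and let $\phi:\mathbb{R}^n\times[0,\infty)\to[0,\infty)$ be a smooth function, and define $$H:=\alpha\Delta u+\beta|\nabla u|^2+c\,e^{u(p-1)}+\phi .$$ Then $$H_t=\Delta H+2\nabla H\cdot\nabla u+(p-1)e^{u(p-1)}H+2(\alpha-\beta)|\nabla\nabla u|^2+\big(\alpha(p-1)+\beta-cp\big)(p-1)e^{u(p-1)}|\nabla u|^2-(p-1)e^{u(p-1)}\phi+\phi_t-\Delta\phi-2\nabla\phi\cdot\nabla u .$$
   Context: $\Delta$ and $\nabla$ are the spatial Laplacian and gradient on $\mathbb{R}^n$, $\nabla\nabla u$ is the spatial Hessian of $u$ and $|\nabla\nabla u|^2=\sum_{i,j}(\partial_i\partial_j u)^2$. Subscript $t$ denotes the time derivative. *)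

theory Defs
  imports "HOL-Analysis.Analysis"
begin

text \<open>Functions on space-time are curried: g :: real^'n => real => real, g x t.
  A direction is either Some i (spatial coordinate i) or None (time).\<close>

definition pd :: "'n::finite option \<Rightarrow> (real^'n \<Rightarrow> real \<Rightarrow> real) \<Rightarrow> real^'n \<Rightarrow> real \<Rightarrow> real" where
  "pd d g x t = (case d of
      Some i \<Rightarrow> deriv (\<lambda>s. g (x + s *\<^sub>R axis i 1) t) 0
    | None \<Rightarrow> deriv (\<lambda>s. g x (t + s)) 0)"

definition pd_exists :: "'n::finite option \<Rightarrow> (real^'n \<Rightarrow> real \<Rightarrow> real) \<Rightarrow> real^'n \<Rightarrow> real \<Rightarrow> bool" where
  "pd_exists d g x t = (case d of
      Some i \<Rightarrow> (\<lambda>s. g (x + s *\<^sub>R axis i 1) t) differentiable (at 0)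
    | None \<Rightarrow> (\<lambda>s. g x (t + s)) differentiable (at 0))"

definition iter_pd :: "'n::finite option list \<Rightarrow> (real^'n \<Rightarrow> real \<Rightarrow> real) \<Rightarrow> real^'n \<Rightarrow> real \<Rightarrow> real" where
  "iter_pd ds g = foldr pd ds g"

definition smooth_full :: "(real^'n::finite \<Rightarrow> real \<Rightarrow> real) \<Rightarrow> bool" where
  "smooth_full G = (\<forall>ds. (\<forall>d x t. pd_exists d (iter_pd ds G) x t)
      \<and> continuous_on UNIV (\<lambda>z. iter_pd ds G (fst z) (snd z)))"

definition smooth_half :: "(real^'n::finite \<Rightarrow> real \<Rightarrow> real) \<Rightarrow> bool" where
  "smooth_half g = (\<exists>G. smooth_full G \<and> (\<forall>x t. 0 \<le> t \<longrightarrow> G x t = g x t))"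

definition dt :: "(real^'n::finite \<Rightarrow> real \<Rightarrow> real) \<Rightarrow> real^'n \<Rightarrow> real \<Rightarrow> real" where
  "dt g x t = (SOME D. ((\<lambda>s. g x s) has_real_derivative D) (at t within {0..}))"

definition dx :: "'n::finite \<Rightarrow> (real^'n \<Rightarrow> real \<Rightarrow> real) \<Rightarrow> real^'n \<Rightarrow> real \<Rightarrow> real" where
  "dx i g = pd (Some i) g"

definition lap :: "(real^'n::finite \<Rightarrow> real \<Rightarrow> real) \<Rightarrow> real^'n \<Rightarrow> real \<Rightarrow> real" where
  "lap g x t = (\<Sum>i\<in>UNIV. dx i (dx i g) x t)"

definition grad :: "(real^'n::finite \<Rightarrow> real \<Rightarrow> real) \<Rightarrow> real^'n \<Rightarrow> real \<Rightarrow> real^'n" where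
  "grad g x t = (\<chi> i. dx i g x t)"

definition hess_sq :: "(real^'n::finite \<Rightarrow> real \<Rightarrow> real) \<Rightarrow> real^'n \<Rightarrow> real \<Rightarrow> real" where
  "hess_sq g x t = (\<Sum>i\<in>UNIV. \<Sum>j\<in>UNIV. (dx i (dx j g) x t)\<^sup>2)"

end

theory Submission
  imports Defs
begin



lemma shift_deriv:
  fixes F :: "'a::real_normed_vector \<Rightarrow> real"
  assumes "((\<lambda>s. F (q + s *\<^sub>R v)) has_real_derivative D) (at 0)"
    and "q = z + \<sigma> *\<^sub>R v"
  shows "((\<lambda>s. F (z + s *\<^sub>R v)) has_real_derivative D) (at \<sigma>)"
proof -
  have "((\<lambda>s. F (z + (s + \<sigma>) *\<^sub>R v)) has_real_derivative D) (at 0)"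
    using assms by (simp add: scaleR_add_left algebra_simps)
  then show ?thesis using DERIV_shift[of "\<lambda>s. F (z + s *\<^sub>R v)" D 0 \<sigma>] by simp
qed

lemma diff_deriv:
  fixes F :: "'a::real_normed_vector \<Rightarrow> real"
  assumes "\<forall>z. (\<lambda>s. F (z + s *\<^sub>R v)) differentiable (at 0)"
  shows "((\<lambda>s. F (z + s *\<^sub>R v)) has_real_derivative (deriv (\<lambda>s. F ((z + \<sigma> *\<^sub>R v) + s *\<^sub>R v)) 0)) (at \<sigma>)"
  apply (rule shift_deriv[of F "z + \<sigma> *\<^sub>R v"])
  using assms DERIV_deriv_iff_real_differentiable by blast+

lemma clairaut:
  fixes F :: "'a::real_normed_vector \<Rightarrow> real" and v w :: 'a
  defines "Dv \<equiv> \<lambda>z. deriv (\<lambda>s. F (z + s *\<^sub>R v)) 0"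
    and "Dw \<equiv> \<lambda>z. deriv (\<lambda>s. F (z + s *\<^sub>R w)) 0"
  defines "D2 \<equiv> \<lambda>z. deriv (\<lambda>s. Dv (z + s *\<^sub>R w)) 0"
    and "D2' \<equiv> \<lambda>z. deriv (\<lambda>s. Dw (z + s *\<^sub>R v)) 0"
  assumes dv: "\<forall>z. (\<lambda>s. F (z + s *\<^sub>R v)) differentiable (at 0)"
    and dw: "\<forall>z. (\<lambda>s. F (z + s *\<^sub>R w)) differentiable (at 0)"
    and dvw: "\<forall>z. (\<lambda>s. Dv (z + s *\<^sub>R w)) differentiable (at 0)"
    and dwv: "\<forall>z. (\<lambda>s. Dw (z + s *\<^sub>R v)) differentiable (at 0)"
    and c1: "continuous_on UNIV D2" and c2: "continuous_on UNIV D2'"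
  shows "D2 z = D2' z"
proof (rule ccontr)
  assume ne: "D2 z \<noteq> D2' z"
  define e where "e = \<bar>D2 z - D2' z\<bar> / 2"
  have e: "e > 0" using ne by (simp add: e_def)
  have "isCont D2 z" using c1 by (simp add: continuous_on_eq_continuous_at)
  then obtain d1 where d1: "d1 > 0" "\<And>y. dist y z < d1 \<Longrightarrow> dist (D2 y) (D2 z) < e"
    using e by (metis continuous_at_eps_delta)
  have "isCont D2' z" using c2 by (simp add: continuous_on_eq_continuous_at)
  then obtain d2 where d2: "d2 > 0" "\<And>y. dist y z < d2 \<Longrightarrow> dist (D2' y) (D2' z) < e"
    using e by (metis continuous_at_eps_delta)
  define d where "d = min d1 d2"
  have d: "d > 0" using d1 d2 by (simp add: d_def)
  define \<epsilon> where "\<epsilon> = d / (norm v + norm w + 1)"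
  have npos: "norm v + norm w + 1 > 0" using norm_ge_zero[of v] norm_ge_zero[of w] by linarith
  have epos: "\<epsilon> > 0" using d npos by (simp add: \<epsilon>_def)
  have small: "\<epsilon> * (norm v + norm w) < d"
  proof -
    have "\<epsilon> * (norm v + norm w + 1) = d" using npos by (simp add: \<epsilon>_def)
    thus ?thesis using epos by (simp add: algebra_simps)
  qed
  define P where "P = (\<lambda>\<sigma> \<rho>. z + \<sigma> *\<^sub>R v + \<rho> *\<^sub>R w)"
  define \<Delta> where "\<Delta> = F (P \<epsilon> \<epsilon>) - F (P \<epsilon> 0) - F (P 0 \<epsilon>) + F (P 0 0)"
  have near: "dist (P \<sigma> \<rho>) z < d" if "0 < \<sigma>" "\<sigma> < \<epsilon>" "0 < \<rho>" "\<rho> < \<epsilon>" for \<sigma> \<rho>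
  proof -
    have "dist (P \<sigma> \<rho>) z = norm (\<sigma> *\<^sub>R v + \<rho> *\<^sub>R w)" by (simp add: P_def dist_norm)
    also have "\<dots> \<le> \<sigma> * norm v + \<rho> * norm w"
      using norm_triangle_ineq[of "\<sigma> *\<^sub>R v" "\<rho> *\<^sub>R w"] that by simp
    also have "\<dots> \<le> \<epsilon> * norm v + \<epsilon> * norm w"
      using that by (intro add_mono mult_right_mono) auto
    finally show ?thesis using small by (simp add: algebra_simps)
  qed
  obtain \<sigma>1 where s1: "0 < \<sigma>1" "\<sigma>1 < \<epsilon>"
    "(F (P \<epsilon> \<epsilon>) - F (P \<epsilon> 0)) - (F (P 0 \<epsilon>) - F (P 0 0)) = (\<epsilon> - 0) * (Dv (P \<sigma>1 \<epsilon>) - Dv (P \<sigma>1 0))"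
  proof -
    have "\<exists>y. 0 < y \<and> y < \<epsilon> \<and> (\<lambda>s. F (P s \<epsilon>) - F (P s 0)) \<epsilon> - (\<lambda>s. F (P s \<epsilon>) - F (P s 0)) 0
        = (\<epsilon> - 0) * (\<lambda>s. Dv (P s \<epsilon>) - Dv (P s 0)) y"
    proof (rule MVT2[OF epos])
      fix x assume "0 \<le> x" "x \<le> \<epsilon>"
      have h1: "((\<lambda>s. F ((z + \<epsilon> *\<^sub>R w) + s *\<^sub>R v)) has_real_derivative Dv (P x \<epsilon>)) (at x)"
        using diff_deriv[OF dv, of "z + \<epsilon> *\<^sub>R w" x] by (simp add: Dv_def P_def algebra_simps)
      have h2: "((\<lambda>s. F (z + s *\<^sub>R v)) has_real_derivative Dv (P x 0)) (at x)"
        using diff_deriv[OF dv, of z x] by (simp add: Dv_def P_def algebra_simps)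
      have "((\<lambda>s. F ((z + \<epsilon> *\<^sub>R w) + s *\<^sub>R v) - F (z + s *\<^sub>R v)) has_real_derivative Dv (P x \<epsilon>) - Dv (P x 0)) (at x)"
        by (intro derivative_intros h1 h2)
      then show "((\<lambda>s. F (P s \<epsilon>) - F (P s 0)) has_real_derivative Dv (P x \<epsilon>) - Dv (P x 0)) (at x)"
        by (simp add: P_def algebra_simps)
    qed
    then show ?thesis using that by auto
  qed
  obtain \<rho>1 where r1: "0 < \<rho>1" "\<rho>1 < \<epsilon>"
    "Dv (P \<sigma>1 \<epsilon>) - Dv (P \<sigma>1 0) = (\<epsilon> - 0) * D2 (P \<sigma>1 \<rho>1)"
  proof -
    have "\<exists>y. 0 < y \<and> y < \<epsilon> \<and> (\<lambda>s. Dv (P \<sigma>1 s)) \<epsilon> - (\<lambda>s. Dv (P \<sigma>1 s)) 0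
        = (\<epsilon> - 0) * (\<lambda>s. D2 (P \<sigma>1 s)) y"
    proof (rule MVT2[OF epos])
      fix x assume "0 \<le> x" "x \<le> \<epsilon>"
      show "((\<lambda>s. Dv (P \<sigma>1 s)) has_real_derivative D2 (P \<sigma>1 x)) (at x)"
        using diff_deriv[OF dvw, of "z + \<sigma>1 *\<^sub>R v" x] by (simp add: D2_def P_def algebra_simps)
    qed
    then show ?thesis using that by auto
  qed
  obtain \<rho>2 where s2: "0 < \<rho>2" "\<rho>2 < \<epsilon>"
    "(F (P \<epsilon> \<epsilon>) - F (P 0 \<epsilon>)) - (F (P \<epsilon> 0) - F (P 0 0)) = (\<epsilon> - 0) * (Dw (P \<epsilon> \<rho>2) - Dw (P 0 \<rho>2))"
  proof -
    have "\<exists>y. 0 < y \<and> y < \<epsilon> \<and> (\<lambda>s. F (P \<epsilon> s) - F (P 0 s)) \<epsilon> - (\<lambda>s. F (P \<epsilon> s) - F (P 0 s)) 0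
        = (\<epsilon> - 0) * (\<lambda>s. Dw (P \<epsilon> s) - Dw (P 0 s)) y"
    proof (rule MVT2[OF epos])
      fix x assume "0 \<le> x" "x \<le> \<epsilon>"
      have h1: "((\<lambda>s. F ((z + \<epsilon> *\<^sub>R v) + s *\<^sub>R w)) has_real_derivative Dw (P \<epsilon> x)) (at x)"
        using diff_deriv[OF dw, of "z + \<epsilon> *\<^sub>R v" x] by (simp add: Dw_def P_def algebra_simps)
      have h2: "((\<lambda>s. F (z + s *\<^sub>R w)) has_real_derivative Dw (P 0 x)) (at x)"
        using diff_deriv[OF dw, of z x] by (simp add: Dw_def P_def algebra_simps)
      have "((\<lambda>s. F ((z + \<epsilon> *\<^sub>R v) + s *\<^sub>R w) - F (z + s *\<^sub>R w)) has_real_derivative Dw (P \<epsilon> x) - Dw (P 0 x)) (at x)"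
        by (intro derivative_intros h1 h2)
      then show "((\<lambda>s. F (P \<epsilon> s) - F (P 0 s)) has_real_derivative Dw (P \<epsilon> x) - Dw (P 0 x)) (at x)"
        by (simp add: P_def algebra_simps)
    qed
    then show ?thesis using that by auto
  qed
  obtain \<sigma>2 where r2: "0 < \<sigma>2" "\<sigma>2 < \<epsilon>"
    "Dw (P \<epsilon> \<rho>2) - Dw (P 0 \<rho>2) = (\<epsilon> - 0) * D2' (P \<sigma>2 \<rho>2)"
  proof -
    have "\<exists>y. 0 < y \<and> y < \<epsilon> \<and> (\<lambda>s. Dw (P s \<rho>2)) \<epsilon> - (\<lambda>s. Dw (P s \<rho>2)) 0
        = (\<epsilon> - 0) * (\<lambda>s. D2' (P s \<rho>2)) y"
    proof (rule MVT2[OF epos])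
      fix x assume "0 \<le> x" "x \<le> \<epsilon>"
      show "((\<lambda>s. Dw (P s \<rho>2)) has_real_derivative D2' (P x \<rho>2)) (at x)"
        using diff_deriv[OF dwv, of "z + \<rho>2 *\<^sub>R w" x] by (simp add: D2'_def P_def algebra_simps)
    qed
    then show ?thesis using that by auto
  qed
  have "\<epsilon> * \<epsilon> * D2 (P \<sigma>1 \<rho>1) = \<epsilon> * \<epsilon> * D2' (P \<sigma>2 \<rho>2)"
    using s1(3) r1(3) s2(3) r2(3) by (simp add: algebra_simps)
  hence eq: "D2 (P \<sigma>1 \<rho>1) = D2' (P \<sigma>2 \<rho>2)" using epos by simp
  have "dist (D2 (P \<sigma>1 \<rho>1)) (D2 z) < e" using d1(2) near[OF s1(1,2) r1(1,2)] d_def by simp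
  moreover have "dist (D2' (P \<sigma>2 \<rho>2)) (D2' z) < e" using d2(2) near[OF r2(1,2) s2(1,2)] d_def by simp
  ultimately have "\<bar>D2' (P \<sigma>2 \<rho>2) - D2 z\<bar> < e" "\<bar>D2' (P \<sigma>2 \<rho>2) - D2' z\<bar> < e"
    using eq by (simp_all add: dist_real_def)
  thus False unfolding e_def by (auto simp: abs_if split: if_splits)
qed




definition vdir :: "'n::finite option \<Rightarrow> (real^'n) \<times> real" where
  "vdir d = (case d of Some i \<Rightarrow> (axis i 1, 0) | None \<Rightarrow> (0, 1))"

definition unc :: "(real^'n \<Rightarrow> real \<Rightarrow> real) \<Rightarrow> (real^'n) \<times> real \<Rightarrow> real" where
  "unc g z = g (fst z) (snd z)"

lemma line_alt: "(\<lambda>s. unc g ((x, t) + s *\<^sub>R vdir d)) =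
   (case d of Some i \<Rightarrow> (\<lambda>s. g (x + s *\<^sub>R axis i 1) t) | None \<Rightarrow> (\<lambda>s. g x (t + s)))"
  by (cases d) (auto simp: unc_def vdir_def)

lemma pd_alt: "pd d g x t = deriv (\<lambda>s. unc g ((x, t) + s *\<^sub>R vdir d)) 0"
  by (cases d) (simp_all add: pd_def line_alt)

lemma pd_exists_alt: "pd_exists d g x t = ((\<lambda>s. unc g ((x, t) + s *\<^sub>R vdir d)) differentiable (at 0))"
  by (cases d) (simp_all add: pd_exists_def line_alt)

lemma unc_pd: "unc (pd d g) = (\<lambda>z. deriv (\<lambda>s. unc g (z + s *\<^sub>R vdir d)) 0)"
  by (rule ext) (simp add: unc_def pd_alt)

lemma iter_pd_Cons: "iter_pd (d # ds) G = pd d (iter_pd ds G)"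
  by (simp add: iter_pd_def)

lemma iter_pd_append: "iter_pd (xs @ ys) G = iter_pd xs (iter_pd ys G)"
  by (simp add: iter_pd_def)

lemma clairaut2:
  fixes F :: "'a::real_normed_vector \<Rightarrow> real" and v w :: 'a
  assumes Dv: "Dv = (\<lambda>z. deriv (\<lambda>s. F (z + s *\<^sub>R v)) 0)"
    and Dw: "Dw = (\<lambda>z. deriv (\<lambda>s. F (z + s *\<^sub>R w)) 0)"
    and D2: "D2 = (\<lambda>z. deriv (\<lambda>s. Dv (z + s *\<^sub>R w)) 0)"
    and D2': "D2' = (\<lambda>z. deriv (\<lambda>s. Dw (z + s *\<^sub>R v)) 0)"
  assumes dv: "\<forall>z. (\<lambda>s. F (z + s *\<^sub>R v)) differentiable (at 0)"
    and dw: "\<forall>z. (\<lambda>s. F (z + s *\<^sub>R w)) differentiable (at 0)"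
    and dvw: "\<forall>z. (\<lambda>s. Dv (z + s *\<^sub>R w)) differentiable (at 0)"
    and dwv: "\<forall>z. (\<lambda>s. Dw (z + s *\<^sub>R v)) differentiable (at 0)"
    and c1: "continuous_on UNIV D2" and c2: "continuous_on UNIV D2'"
  shows "D2 z = D2' z"
  using clairaut[of F v w] assms by blast

lemma pd_swap0:
  assumes sm: "smooth_full G"
  shows "iter_pd (a # b # ds) G = iter_pd (b # a # ds) G"
proof -
  define K where "K = iter_pd ds G"
  have ex: "\<And>es d x t. pd_exists d (iter_pd es G) x t" using sm by (simp add: smooth_full_def)
  have co: "\<And>es. continuous_on UNIV (unc (iter_pd es G))"
    using sm by (simp add: smooth_full_def unc_def)
  have exz: "\<And>es d z. (\<lambda>s. unc (iter_pd es G) (z + s *\<^sub>R vdir d)) differentiable (at 0)"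
    using ex by (metis pd_exists_alt prod.collapse)
  have "unc (pd a (pd b K)) z = unc (pd b (pd a K)) z" for z
  proof -
    have U: "\<And>d. (\<lambda>z. deriv (\<lambda>s. unc K (z + s *\<^sub>R vdir d)) 0) = unc (pd d K)"
      by (simp add: unc_pd)
    have U2: "\<And>d e. (\<lambda>z. deriv (\<lambda>s. unc (pd e K) (z + s *\<^sub>R vdir d)) 0) = unc (pd d (pd e K))"
      by (simp add: unc_pd)
    have pK: "\<And>d. pd d K = iter_pd [d] K" "\<And>d e. pd d (pd e K) = iter_pd [d,e] K"
      by (simp_all add: iter_pd_def)
    have iK: "\<And>es. iter_pd es K = iter_pd (es @ ds) G" by (simp add: K_def iter_pd_append)
    have pd1: "\<And>d. pd d K = iter_pd (d # ds) G" by (simp add: K_def iter_pd_Cons)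
    have pd2: "\<And>d e. pd d (pd e K) = iter_pd (d # e # ds) G" by (simp add: K_def iter_pd_Cons)
    show ?thesis
    proof (rule clairaut2[of "unc (pd b K)" "unc K" "vdir b" "unc (pd a K)" "vdir a"])
      show "\<forall>z. (\<lambda>s. unc K (z + s *\<^sub>R vdir b)) differentiable at 0" using exz K_def by blast
      show "\<forall>z. (\<lambda>s. unc K (z + s *\<^sub>R vdir a)) differentiable at 0" using exz K_def by blast
      show "\<forall>z. (\<lambda>s. unc (pd b K) (z + s *\<^sub>R vdir a)) differentiable at 0" unfolding pd1 using exz by blast
      show "\<forall>z. (\<lambda>s. unc (pd a K) (z + s *\<^sub>R vdir b)) differentiable at 0" unfolding pd1 using exz by blast
      show "continuous_on UNIV (unc (pd a (pd b K)))" unfolding pd2 using co by blast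
      show "continuous_on UNIV (unc (pd b (pd a K)))" unfolding pd2 using co by blast
    qed (simp_all add: unc_pd)
  qed
  then have "\<And>x t. pd a (pd b K) x t = pd b (pd a K) x t"
    by (metis fst_conv snd_conv unc_def)
  then show ?thesis by (simp add: K_def iter_pd_Cons fun_eq_iff)
qed

lemma pd_swap:
  assumes sm: "smooth_full G"
  shows "iter_pd (xs @ a # b # ds) G = iter_pd (xs @ b # a # ds) G"
  using pd_swap0[OF sm, of a b ds] by (simp add: iter_pd_append[of xs])




definition D :: "'n::finite \<Rightarrow> (real^'n \<Rightarrow> real) \<Rightarrow> real^'n \<Rightarrow> real" where
  "D i h y = deriv (\<lambda>s. h (y + s *\<^sub>R axis i 1)) 0"

definition hasD :: "'n::finite \<Rightarrow> (real^'n \<Rightarrow> real) \<Rightarrow> real^'n \<Rightarrow> real \<Rightarrow> bool" where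
  "hasD i h y d = ((\<lambda>s. h (y + s *\<^sub>R axis i 1)) has_real_derivative d) (at 0)"

lemma dx_D: "dx i g x t = D i (\<lambda>y. g y t) x"
  by (simp add: dx_def pd_def D_def)

lemma dx_D_fun: "(\<lambda>y. dx i g y t) = D i (\<lambda>y. g y t)"
  by (simp add: dx_D fun_eq_iff)

lemma hasD_D: "hasD i h y d \<Longrightarrow> D i h y = d"
  by (simp add: hasD_def D_def DERIV_imp_deriv)

lemma D_fun: "(\<And>y. hasD i h y (h' y)) \<Longrightarrow> D i h = h'"
  by (simp add: hasD_D fun_eq_iff)

lemma hasD_cong: "hasD i h y d \<Longrightarrow> d = d' \<Longrightarrow> hasD i h y d'" by simp

lemma hasD_const: "hasD i (\<lambda>y. c) y 0"
  unfolding hasD_def by (auto intro!: derivative_eq_intros simp: algebra_simps)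

lemma hasD_add: "hasD i a y a' \<Longrightarrow> hasD i b y b' \<Longrightarrow> hasD i (\<lambda>y. a y + b y) y (a' + b')"
  unfolding hasD_def by (auto intro!: derivative_eq_intros simp: algebra_simps)

lemma hasD_diff: "hasD i a y a' \<Longrightarrow> hasD i b y b' \<Longrightarrow> hasD i (\<lambda>y. a y - b y) y (a' - b')"
  unfolding hasD_def by (auto intro!: derivative_eq_intros simp: algebra_simps)

lemma hasD_mult: "hasD i a y a' \<Longrightarrow> hasD i b y b' \<Longrightarrow> hasD i (\<lambda>y. a y * b y) y (a' * b y + a y * b')"
  unfolding hasD_def by (auto intro!: derivative_eq_intros simp: algebra_simps)

lemma hasD_cmult: "hasD i a y a' \<Longrightarrow> hasD i (\<lambda>y. c * a y) y (c * a')"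
  unfolding hasD_def by (auto intro!: derivative_eq_intros simp: algebra_simps)

lemma hasD_divide: "hasD i a y a' \<Longrightarrow> hasD i b y b' \<Longrightarrow> b y \<noteq> 0 \<Longrightarrow>
    hasD i (\<lambda>y. a y / b y) y (a' / b y - a y * b' / (b y)^2)"
  unfolding hasD_def
  apply (rule derivative_eq_intros)
     apply assumption+
   apply simp
  apply (simp add: field_simps power2_eq_square)
  done

lemma hasD_exp: "hasD i a y a' \<Longrightarrow> hasD i (\<lambda>y. exp (a y)) y (exp (a y) * a')"
  unfolding hasD_def by (auto intro!: derivative_eq_intros simp: algebra_simps)

lemma hasD_ln: "hasD i a y a' \<Longrightarrow> a y > 0 \<Longrightarrow> hasD i (\<lambda>y. ln (a y)) y (a' / a y)"
  unfolding hasD_def by (auto intro!: derivative_eq_intros simp: field_simps)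

lemma hasD_power2: "hasD i a y a' \<Longrightarrow> hasD i (\<lambda>y. (a y)^2) y (2 * a y * a')"
  unfolding hasD_def by (auto intro!: derivative_eq_intros simp: algebra_simps)

lemma hasD_sum:
  fixes f :: "'k \<Rightarrow> real^'n::finite \<Rightarrow> real"
  shows "finite A \<Longrightarrow> (\<And>k. k \<in> A \<Longrightarrow> hasD i (f k) y (f' k)) \<Longrightarrow>
    hasD i (\<lambda>y. \<Sum>k\<in>A. f k y) y (\<Sum>k\<in>A. f' k)"
proof (induction A rule: finite_induct)
  case empty then show ?case by (simp add: hasD_const)
next
  case (insert a A)
  then show ?case using hasD_add[of i "f a" y "f' a" "\<lambda>y. \<Sum>k\<in>A. f k y" "\<Sum>k\<in>A. f' k"] by simp
qed

lemma D_sum: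
  fixes f :: "'k::finite \<Rightarrow> real^'n::finite \<Rightarrow> real"
  shows "(\<And>k y. hasD i (f k) y (f' k y)) \<Longrightarrow> D i (\<lambda>y. \<Sum>k\<in>UNIV. f k y) = (\<lambda>y. \<Sum>k\<in>UNIV. f' k y)"
  by (rule D_fun) (rule hasD_sum, simp_all)

lemma hasD_gs:
  assumes "smooth_full G"
  shows "hasD i (\<lambda>y. iter_pd ds G y t) y (iter_pd (Some i # ds) G y t)"
proof -
  have "pd_exists (Some i) (iter_pd ds G) y t" using assms by (simp add: smooth_full_def)
  hence "(\<lambda>s. iter_pd ds G (y + s *\<^sub>R axis i 1) t) differentiable (at 0)" by (simp add: pd_exists_def)
  hence "((\<lambda>s. iter_pd ds G (y + s *\<^sub>R axis i 1) t) has_real_derivative pd (Some i) (iter_pd ds G) y t) (at 0)"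
    by (simp add: pd_def DERIV_deriv_iff_real_differentiable[symmetric])
  thus ?thesis by (simp add: hasD_def iter_pd_Cons)
qed




definition dable :: "'n::finite \<Rightarrow> (real^'n \<Rightarrow> real) \<Rightarrow> real^'n \<Rightarrow> bool" where
  "dable i h y = (\<exists>d. hasD i h y d)"

lemma dable_add: "dable i a y \<Longrightarrow> dable i b y \<Longrightarrow> dable i (\<lambda>y. a y + b y) y"
  unfolding dable_def using hasD_add by blast
lemma dable_diff: "dable i a y \<Longrightarrow> dable i b y \<Longrightarrow> dable i (\<lambda>y. a y - b y) y"
  unfolding dable_def using hasD_diff by blast
lemma dable_mult: "dable i a y \<Longrightarrow> dable i b y \<Longrightarrow> dable i (\<lambda>y. a y * b y) y"
  unfolding dable_def using hasD_mult by blast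
lemma dable_divide: "dable i a y \<Longrightarrow> dable i b y \<Longrightarrow> b y \<noteq> 0 \<Longrightarrow> dable i (\<lambda>y. a y / b y) y"
  unfolding dable_def using hasD_divide by blast
lemma dable_power2: "dable i a y \<Longrightarrow> dable i (\<lambda>y. (a y)^2) y"
  unfolding dable_def using hasD_power2 by blast
lemma dable_const: "dable i (\<lambda>y. c) y"
  unfolding dable_def using hasD_const by blast
lemma dable_cmult: "dable i a y \<Longrightarrow> dable i (\<lambda>y. c * a y) y"
  unfolding dable_def using hasD_cmult by blast
lemma dable_power3: "dable i a y \<Longrightarrow> dable i (\<lambda>y. (a y)^3) y"
proof -
  assume "dable i a y"
  hence "dable i (\<lambda>y. (a y)^2 * a y) y" by (intro dable_mult dable_power2)
  thus ?thesis by (simp add: power3_eq_cube power2_eq_square mult.assoc)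
qed

lemma dable_hasD: "dable i h y \<Longrightarrow> hasD i h y (D i h y)"
  unfolding dable_def using hasD_D by metis

locale slc =
  fixes G :: "real^'n::finite \<Rightarrow> real \<Rightarrow> real" and t :: real
  assumes sm: "smooth_full G" and pos: "\<And>y. G y t > 0"
begin

definition gs :: "'n option list \<Rightarrow> real^'n \<Rightarrow> real" where
  "gs ds = (\<lambda>y. iter_pd ds G y t)"

lemma g0: "gs [] y = G y t" by (simp add: gs_def iter_pd_def)
lemma g0ne: "gs [] y \<noteq> 0" using pos[of y] by (simp add: g0)
lemma g0pos: "gs [] y > 0" using pos[of y] by (simp add: g0)

lemma hasD_g: "hasD i (gs ds) y (gs (Some i # ds) y)"
  unfolding gs_def by (rule hasD_gs[OF sm])

lemma dable_g: "dable i (gs ds) y"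
  using hasD_g dable_def by blast

lemma D_g: "D i (gs ds) = gs (Some i # ds)"
  by (rule D_fun, rule hasD_g)

lemma gs_swap: "gs (xs @ a # b # ds) = gs (xs @ b # a # ds)"
  unfolding gs_def using pd_swap[OF sm] by metis

definition U where "U = (\<lambda>y. ln (G y t))"

lemma U_eq: "U = (\<lambda>y. ln (gs [] y))" by (simp add: U_def g0)

lemma hasD_U: "hasD i U y (gs [Some i] y / gs [] y)"
  unfolding U_eq by (rule hasD_ln[OF hasD_g g0pos])

lemma U1: "D i U = (\<lambda>y. gs [Some i] y / gs [] y)"
  by (rule D_fun, rule hasD_U)

lemma hasD_Q: "hasD k (\<lambda>y. gs ds y / gs [] y) y
    (gs (Some k # ds) y / gs [] y - gs ds y * gs [Some k] y / (gs [] y)^2)"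
  by (rule hasD_divide[OF hasD_g hasD_g g0ne])

lemma Q1: "D k (\<lambda>y. gs ds y / gs [] y) =
   (\<lambda>y. gs (Some k # ds) y / gs [] y - gs ds y * gs [Some k] y / (gs [] y)^2)"
  by (rule D_fun, rule hasD_Q)

lemma Q2: "D l (D k (\<lambda>y. gs ds y / gs [] y)) = (\<lambda>y.
     gs (Some l # Some k # ds) y / gs [] y - gs (Some k # ds) y * gs [Some l] y / (gs [] y)^2
   - (gs (Some l # ds) y * gs [Some k] y + gs ds y * gs [Some l, Some k] y) / (gs [] y)^2
   + 2 * gs ds y * gs [Some k] y * gs [Some l] y / (gs [] y)^3)"
  unfolding Q1
proof (rule D_fun)
  fix y
  have "hasD l (\<lambda>y. gs (Some k # ds) y / gs [] y - (gs ds y * gs [Some k] y) / (gs [] y)^2) y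
     (gs (Some l # Some k # ds) y / gs [] y - gs (Some k # ds) y * gs [Some l] y / (gs [] y)^2
     - ((gs (Some l # ds) y * gs [Some k] y + gs ds y * gs [Some l, Some k] y) / (gs [] y)^2
        - (gs ds y * gs [Some k] y) * (2 * gs [] y * gs [Some l] y) / ((gs [] y)^2)^2))"
    by (intro hasD_diff hasD_Q hasD_divide hasD_mult hasD_g hasD_power2) (use g0ne in auto)
  then show "hasD l (\<lambda>y. gs (Some k # ds) y / gs [] y - gs ds y * gs [Some k] y / (gs [] y)^2) y
     (gs (Some l # Some k # ds) y / gs [] y - gs (Some k # ds) y * gs [Some l] y / (gs [] y)^2
   - (gs (Some l # ds) y * gs [Some k] y + gs ds y * gs [Some l, Some k] y) / (gs [] y)^2
   + 2 * gs ds y * gs [Some k] y * gs [Some l] y / (gs [] y)^3)"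
    apply (rule hasD_cong)
    using g0ne[of y] by (simp add: field_simps power2_eq_square power3_eq_cube)
qed

lemma U2: "D k (D j U) = (\<lambda>y. gs [Some k, Some j] y / gs [] y - gs [Some j] y * gs [Some k] y / (gs [] y)^2)"
  unfolding U1 Q1 by simp

lemma U3: "D l (D k (D j U)) = (\<lambda>y.
     gs [Some l, Some k, Some j] y / gs [] y - gs [Some k, Some j] y * gs [Some l] y / (gs [] y)^2
   - (gs [Some l, Some j] y * gs [Some k] y + gs [Some j] y * gs [Some l, Some k] y) / (gs [] y)^2
   + 2 * gs [Some j] y * gs [Some k] y * gs [Some l] y / (gs [] y)^3)"
  unfolding U1 Q2 by simp

lemma dable_U3: "dable m (D l (D k (D j U))) y"
  unfolding U3
  by (intro dable_add dable_diff dable_divide dable_mult dable_g dable_power2 dable_power3 dable_const g0ne)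
     (simp_all add: g0ne)

lemma U3_comm: "D a (D a (D b U)) = D b (D a (D a U))"
proof -
  have e1: "gs [Some a, Some a, Some b] = gs [Some b, Some a, Some a]"
    using gs_swap[of "[Some a]" "Some a" "Some b" "[]"] gs_swap[of "[]" "Some a" "Some b" "[Some a]"] by simp
  have e2: "gs [Some a, Some b] = gs [Some b, Some a]"
    using gs_swap[of "[]" "Some a" "Some b" "[]"] by simp
  show ?thesis unfolding U3 e1 e2 by (simp add: fun_eq_iff algebra_simps add_divide_distrib)
qed

end



context slc begin

lemma dable_U: "dable i U y" using hasD_U dable_def by blast
lemma dable_U1: "dable i (D j U) y" unfolding U1 using hasD_Q dable_def by blast
lemma dable_U2: "dable i (D k (D j U)) y"
  unfolding U2 by (intro dable_add dable_diff dable_divide dable_mult dable_g dable_power2 dable_const)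
     (simp_all add: g0ne)

definition EE :: "real \<Rightarrow> real^'n \<Rightarrow> real" where "EE p = (\<lambda>y. exp (U y * (p - 1)))"

lemma hasD_E: "hasD i (EE p) y (EE p y * (D i U y * (p - 1)))"
  unfolding EE_def
  apply (rule hasD_exp)
  apply (rule hasD_cong)
   apply (rule hasD_mult[OF dable_hasD[OF dable_U] hasD_const])
  by simp

lemma D_E: "D i (EE p) = (\<lambda>y. EE p y * (D i U y * (p - 1)))"
  by (rule D_fun, rule hasD_E)

definition FF where "FF p a b c P = (\<lambda>y. a * (\<Sum>j\<in>UNIV. D j (D j U) y) + b * (\<Sum>j\<in>UNIV. (D j U y)^2) + c * EE p y + P y)"

lemma DF:
  assumes "\<And>y. dable i P y"
  shows "D i (FF p a b c P) = (\<lambda>y. a * (\<Sum>j\<in>UNIV. D i (D j (D j U)) y) + b * (\<Sum>j\<in>UNIV. 2 * D j U y * D i (D j U) y)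
     + c * (EE p y * (D i U y * (p - 1))) + D i P y)"
  unfolding FF_def
  apply (rule D_fun)
  apply (intro hasD_add hasD_cmult hasD_sum hasD_E dable_hasD assms dable_U2 hasD_power2 dable_U1)
  by simp_all

lemma DDF:
  assumes "\<And>y. dable i P y" "dable i (D i P) x"
  shows "D i (D i (FF p a b c P)) x = a * (\<Sum>j\<in>UNIV. D i (D i (D j (D j U))) x)
     + b * (\<Sum>j\<in>UNIV. 2 * (D i (D j U) x * D i (D j U) x + D j U x * D i (D i (D j U)) x))
     + c * (EE p x * (D i U x * (p - 1)) * (D i U x * (p - 1)) + EE p x * (D i (D i U) x * (p - 1)))
     + D i (D i P) x"
  unfolding DF[OF assms(1)]
  apply (rule hasD_D)
  apply (rule hasD_cong)
   apply (rule hasD_add)+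
      apply (rule hasD_cmult, rule hasD_sum, simp, rule dable_hasD, rule dable_U3)
     apply (rule hasD_cmult, rule hasD_sum, simp, rule hasD_mult, rule hasD_cmult, rule dable_hasD, rule dable_U1, rule dable_hasD, rule dable_U2)
    apply (rule hasD_cmult, rule hasD_mult, rule hasD_E, rule hasD_mult, rule dable_hasD, rule dable_U1, rule hasD_const)
   apply (rule dable_hasD, rule assms(2))
  by (simp add: sum.distrib algebra_simps sum_distrib_left)

end



context slc begin

definition TT where "TT = (\<lambda>y. gs [None] y / gs [] y)"

lemma FF_gs: "FF p a b c P y = a * (\<Sum>j\<in>UNIV. gs [Some j, Some j] y / gs [] y - gs [Some j] y * gs [Some j] y / (gs [] y)^2)
   + b * (\<Sum>j\<in>UNIV. (gs [Some j] y / gs [] y)^2) + c * exp (ln (gs [] y) * (p - 1)) + P y"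
  unfolding FF_def U2 U1 EE_def by (simp add: U_eq Q1)

lemma TT_FF:
  assumes "\<And>y. gs [None] y = (\<Sum>k\<in>UNIV. gs [Some k, Some k] y) + gs [] y powr p"
  shows "TT = FF p 1 1 1 (\<lambda>_. 0)"
proof (rule ext)
  fix y
  have gp: "gs [] y > 0" by (rule g0pos)
  have e: "exp (ln (gs [] y) * (p - 1)) = gs [] y powr p / gs [] y"
    using gp by (simp add: powr_def exp_diff algebra_simps)
  have "FF p 1 1 1 (\<lambda>_. 0) y = (\<Sum>j\<in>UNIV. gs [Some j, Some j] y / gs [] y) + gs [] y powr p / gs [] y"
    unfolding FF_gs e by (simp add: sum_subtractf power_divide power2_eq_square)
  also have "\<dots> = gs [None] y / gs [] y"
    unfolding assms[of y] by (simp add: add_divide_distrib sum_divide_distrib)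
  finally show "TT y = FF p 1 1 1 (\<lambda>_. 0) y" by (simp add: TT_def)
qed

end

lemma dt_eq:
  fixes g K :: "real \<Rightarrow> real"
  assumes "(K has_real_derivative Dv) (at t)" "t \<ge> 0" "\<And>s. s \<ge> 0 \<Longrightarrow> g s = K s"
  shows "(SOME D. (g has_real_derivative D) (at t within {0..})) = Dv"
proof -
  have h: "(g has_real_derivative Dv) (at t within {0..})"
    using has_field_derivative_transform_within[OF has_field_derivative_at_within[OF assms(1)], of 1 "{0..}" g]
      assms by auto
  have uq: "D1 = D2" if "(g has_real_derivative D1) (at t within {0..})" "(g has_real_derivative D2) (at t within {0..})" for D1 D2
  proof -
    have "{t..} \<subseteq> {0..}" using assms(2) by auto
    hence "(g has_real_derivative D1) (at t within {t..})" "(g has_real_derivative D2) (at t within {t..})"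
      using that DERIV_subset by blast+
    hence "(g has_real_derivative D1) (at_right t)" "(g has_real_derivative D2) (at_right t)"
      by (simp_all add: at_within_Ici_at_right)
    thus ?thesis using has_field_derivative_unique trivial_limit_at_right_real by blast
  qed
  show ?thesis using h uq someI[of "\<lambda>D. (g has_real_derivative D) (at t within {0..})" Dv] by blast
qed

lemma timeD:
  assumes "smooth_full G"
  shows "((\<lambda>s. iter_pd ds G x s) has_real_derivative iter_pd (None # ds) G x t) (at t)"
proof -
  have "pd_exists None (iter_pd ds G) x t" using assms by (simp add: smooth_full_def)
  hence "((\<lambda>r. iter_pd ds G x (t + r)) has_real_derivative pd None (iter_pd ds G) x t) (at 0)"
    by (simp add: pd_exists_def pd_def DERIV_deriv_iff_real_differentiable[symmetric])
  hence "((\<lambda>s. iter_pd ds G x s) has_real_derivative pd None (iter_pd ds G) x t) (at (0 + t))"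
    using DERIV_shift[of "\<lambda>s. iter_pd ds G x s" _ 0 t] by (simp add: add.commute)
  thus ?thesis by (simp add: iter_pd_Cons)
qed




lemma final_alg:
  fixes ua pa pb :: "'n::finite \<Rightarrow> real" and ub ud :: "'n \<Rightarrow> 'n \<Rightarrow> real" and uc :: "'n \<Rightarrow> 'n \<Rightarrow> 'n \<Rightarrow> real"
  assumes comm: "\<And>a b. uc a a b = uc b a a"
  shows "\<alpha> * (\<Sum>j\<in>UNIV. 1 * (\<Sum>k\<in>UNIV. ud j k) + 1 * (\<Sum>k\<in>UNIV. 2 * (ub j k * ub j k + ua k * uc j j k))
            + 1 * (e * (ua j * (p - 1)) * (ua j * (p - 1)) + e * (ub j j * (p - 1))) + 0)
       + \<beta> * (\<Sum>j\<in>UNIV. 2 * ua j * (1 * (\<Sum>k\<in>UNIV. uc j k k) + 1 * (\<Sum>k\<in>UNIV. 2 * ua k * ub j k) + 1 * (e * (ua j * (p - 1))) + 0))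
       + c * (e * ((1 * (\<Sum>k\<in>UNIV. ub k k) + 1 * (\<Sum>k\<in>UNIV. (ua k)^2) + 1 * e + 0) * (p - 1))) + Pt
     = (\<Sum>i\<in>UNIV. \<alpha> * (\<Sum>j\<in>UNIV. ud i j) + \<beta> * (\<Sum>j\<in>UNIV. 2 * (ub i j * ub i j + ua j * uc i i j))
            + c * (e * (ua i * (p - 1)) * (ua i * (p - 1)) + e * (ub i i * (p - 1))) + pb i)
       + 2 * (\<Sum>i\<in>UNIV. (\<alpha> * (\<Sum>j\<in>UNIV. uc i j j) + \<beta> * (\<Sum>j\<in>UNIV. 2 * ua j * ub i j) + c * (e * (ua i * (p - 1))) + pa i) * ua i)
       + (p - 1) * e * (\<alpha> * (\<Sum>j\<in>UNIV. ub j j) + \<beta> * (\<Sum>j\<in>UNIV. (ua j)^2) + c * e + pz)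
       + 2 * (\<alpha> - \<beta>) * (\<Sum>i\<in>UNIV. \<Sum>j\<in>UNIV. (ub i j)^2)
       + (\<alpha> * (p - 1) + \<beta> - c * p) * (p - 1) * e * (\<Sum>i\<in>UNIV. (ua i)^2)
       - (p - 1) * e * pz + Pt - (\<Sum>i\<in>UNIV. pb i) - 2 * (\<Sum>i\<in>UNIV. pa i * ua i)"
proof -
  define S1 where "S1 = (\<Sum>j\<in>UNIV. \<Sum>k\<in>UNIV. ud j k)"
  define S2 where "S2 = (\<Sum>j\<in>UNIV. \<Sum>k\<in>UNIV. ub j k * ub j k)"
  define S3 where "S3 = (\<Sum>j\<in>UNIV. ua j * (\<Sum>k\<in>UNIV. uc j k k))"
  define S4 where "S4 = (\<Sum>j\<in>UNIV. ua j * (\<Sum>k\<in>UNIV. ua k * ub j k))"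
  define N where "N = (\<Sum>k\<in>UNIV. (ua k)^2)"
  define L where "L = (\<Sum>k\<in>UNIV. ub k k)"
  have a1: "(\<Sum>j\<in>UNIV. \<Sum>k\<in>UNIV. ua k * uc j j k) = S3"
  proof -
    have "(\<Sum>j\<in>UNIV. \<Sum>k\<in>UNIV. ua k * uc j j k) = (\<Sum>j\<in>UNIV. \<Sum>k\<in>UNIV. ua k * uc k j j)"
      by (intro sum.cong refl) (metis comm)
    also have "\<dots> = (\<Sum>k\<in>UNIV. \<Sum>j\<in>UNIV. ua k * uc k j j)" by (rule sum.swap)
    also have "\<dots> = S3" by (simp add: S3_def sum_distrib_left)
    finally show ?thesis .
  qed
  have a2: "(\<Sum>i\<in>UNIV. \<Sum>j\<in>UNIV. ua j * uc i i j) = S3"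
  proof -
    have "(\<Sum>i\<in>UNIV. \<Sum>j\<in>UNIV. ua j * uc i i j) = (\<Sum>j\<in>UNIV. \<Sum>i\<in>UNIV. ua j * uc i i j)" by (rule sum.swap)
    also have "\<dots> = (\<Sum>j\<in>UNIV. \<Sum>i\<in>UNIV. ua j * uc j i i)" by (intro sum.cong refl) (metis comm)
    also have "\<dots> = S3" by (simp add: S3_def sum_distrib_left)
    finally show ?thesis .
  qed
  have a3: "(\<Sum>i\<in>UNIV. (\<Sum>j\<in>UNIV. uc i j j) * ua i) = S3"
    by (simp add: S3_def mult.commute)
  have a4: "(\<Sum>i\<in>UNIV. (\<Sum>j\<in>UNIV. ua j * ub i j) * ua i) = S4"
    by (simp add: S4_def mult.commute)
  have a5: "(\<Sum>i\<in>UNIV. \<Sum>j\<in>UNIV. (ub i j)^2) = S2" by (simp add: S2_def power2_eq_square)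
  have L1: "(\<Sum>j\<in>UNIV. 1 * (\<Sum>k\<in>UNIV. ud j k) + 1 * (\<Sum>k\<in>UNIV. 2 * (ub j k * ub j k + ua k * uc j j k))
            + 1 * (e * (ua j * (p - 1)) * (ua j * (p - 1)) + e * (ub j j * (p - 1))) + 0)
       = S1 + 2 * S2 + 2 * (\<Sum>j\<in>UNIV. \<Sum>k\<in>UNIV. ua k * uc j j k) + e * (p-1)^2 * N + e * (p - 1) * L"
  proof -
    have "\<And>j. 1 * (\<Sum>k\<in>UNIV. ud j k) + 1 * (\<Sum>k\<in>UNIV. 2 * (ub j k * ub j k + ua k * uc j j k))
            + 1 * (e * (ua j * (p - 1)) * (ua j * (p - 1)) + e * (ub j j * (p - 1))) + 0
       = (\<Sum>k\<in>UNIV. ud j k) + 2 * (\<Sum>k\<in>UNIV. ub j k * ub j k) + 2 * (\<Sum>k\<in>UNIV. ua k * uc j j k)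
         + (e * (p-1)^2) * (ua j)^2 + (e * (p - 1)) * ub j j"
      by (simp add: sum.distrib sum_distrib_left algebra_simps power2_eq_square)
    note eq = this
    show ?thesis
      apply (simp only: eq)
      by (simp add: S1_def S2_def N_def L_def sum.distrib sum_distrib_left[symmetric])
  qed
  have L2: "(\<Sum>j\<in>UNIV. 2 * ua j * (1 * (\<Sum>k\<in>UNIV. uc j k k) + 1 * (\<Sum>k\<in>UNIV. 2 * ua k * ub j k) + 1 * (e * (ua j * (p - 1))) + 0))
     = 2 * S3 + 4 * S4 + 2 * e * (p - 1) * N"
  proof -
    have "\<And>j. 2 * ua j * (1 * (\<Sum>k\<in>UNIV. uc j k k) + 1 * (\<Sum>k\<in>UNIV. 2 * ua k * ub j k) + 1 * (e * (ua j * (p - 1))) + 0)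
      = 2 * (ua j * (\<Sum>k\<in>UNIV. uc j k k)) + 4 * (ua j * (\<Sum>k\<in>UNIV. ua k * ub j k)) + (2 * e * (p - 1)) * (ua j)^2"
      by (simp add: sum.distrib sum_distrib_left algebra_simps power2_eq_square)
    note eq = this
    show ?thesis
      apply (simp only: eq)
      by (simp add: S3_def S4_def N_def sum.distrib sum_distrib_left[symmetric])
  qed
  have R1: "(\<Sum>i\<in>UNIV. \<alpha> * (\<Sum>j\<in>UNIV. ud i j) + \<beta> * (\<Sum>j\<in>UNIV. 2 * (ub i j * ub i j + ua j * uc i i j))
            + c * (e * (ua i * (p - 1)) * (ua i * (p - 1)) + e * (ub i i * (p - 1))) + pb i)
      = \<alpha> * S1 + 2 * \<beta> * S2 + 2 * \<beta> * (\<Sum>i\<in>UNIV. \<Sum>j\<in>UNIV. ua j * uc i i j) + c * e * (p-1)^2 * N + c * e * (p - 1) * L + (\<Sum>i\<in>UNIV. pb i)"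
  proof -
    have "\<And>i. \<alpha> * (\<Sum>j\<in>UNIV. ud i j) + \<beta> * (\<Sum>j\<in>UNIV. 2 * (ub i j * ub i j + ua j * uc i i j))
            + c * (e * (ua i * (p - 1)) * (ua i * (p - 1)) + e * (ub i i * (p - 1))) + pb i
       = \<alpha> * (\<Sum>j\<in>UNIV. ud i j) + (2 * \<beta>) * (\<Sum>j\<in>UNIV. ub i j * ub i j) + (2 * \<beta>) * (\<Sum>j\<in>UNIV. ua j * uc i i j)
         + (c * e * (p-1)^2) * (ua i)^2 + (c * e * (p - 1)) * ub i i + pb i"
      by (simp add: sum.distrib sum_distrib_left algebra_simps power2_eq_square)
    note eq = this
    show ?thesis
      apply (simp only: eq)
      by (simp add: S1_def S2_def N_def L_def sum.distrib sum_distrib_left[symmetric])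
  qed
  have R2: "(\<Sum>i\<in>UNIV. (\<alpha> * (\<Sum>j\<in>UNIV. uc i j j) + \<beta> * (\<Sum>j\<in>UNIV. 2 * ua j * ub i j) + c * (e * (ua i * (p - 1))) + pa i) * ua i)
      = \<alpha> * (\<Sum>i\<in>UNIV. (\<Sum>j\<in>UNIV. uc i j j) * ua i) + 2 * \<beta> * (\<Sum>i\<in>UNIV. (\<Sum>j\<in>UNIV. ua j * ub i j) * ua i)
        + c * e * (p - 1) * N + (\<Sum>i\<in>UNIV. pa i * ua i)"
  proof -
    have "\<And>i. (\<alpha> * (\<Sum>j\<in>UNIV. uc i j j) + \<beta> * (\<Sum>j\<in>UNIV. 2 * ua j * ub i j) + c * (e * (ua i * (p - 1))) + pa i) * ua i
      = \<alpha> * ((\<Sum>j\<in>UNIV. uc i j j) * ua i) + (2 * \<beta>) * ((\<Sum>j\<in>UNIV. ua j * ub i j) * ua i)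
        + (c * e * (p - 1)) * (ua i)^2 + pa i * ua i"
      by (simp add: sum.distrib sum_distrib_left sum_distrib_right algebra_simps power2_eq_square)
    note eq = this
    show ?thesis
      apply (simp only: eq)
      by (simp add: N_def sum.distrib sum_distrib_left[symmetric])
  qed
  show ?thesis
    unfolding L1 L2 R1 R2 a1 a2 a3 a4 a5 N_def[symmetric] L_def[symmetric]
    by (simp add: algebra_simps power2_eq_square)
qed




lemma lap_D: "lap g y s = (\<Sum>i\<in>UNIV. D i (D i (\<lambda>y. g y s)) y)"
  by (simp add: lap_def dx_D dx_D_fun)

lemma grad_inner: "grad g y s \<bullet> grad h y s = (\<Sum>i\<in>UNIV. D i (\<lambda>y. g y s) y * D i (\<lambda>y. h y s) y)"
  by (simp add: grad_def inner_vec_def dx_D)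

lemma norm_grad: "(norm (grad g y s))^2 = (\<Sum>i\<in>UNIV. (D i (\<lambda>y. g y s) y)^2)"
  unfolding power2_norm_eq_inner grad_inner by (simp add: power2_eq_square)

lemma hess_D: "hess_sq g y s = (\<Sum>i\<in>UNIV. \<Sum>j\<in>UNIV. (D i (D j (\<lambda>y. g y s)) y)^2)"
  by (simp add: hess_sq_def dx_D dx_D_fun)

theorem lemma2p1:
  fixes f \<phi> :: "real^'n::finite \<Rightarrow> real \<Rightarrow> real"
    and p \<alpha> \<beta> c :: real
  assumes hp: "p > 1"
    and f_smooth: "smooth_half f"
    and f_pos: "\<forall>x t. 0 \<le> t \<longrightarrow> f x t > 0"
    and f_eq: "\<forall>x t. 0 \<le> t \<longrightarrow> dt f x t = lap f x t + f x t powr p"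
    and phi_smooth: "smooth_half \<phi>"
    and phi_nonneg: "\<forall>x t. 0 \<le> t \<longrightarrow> \<phi> x t \<ge> 0"
  defines "u \<equiv> (\<lambda>x t. ln (f x t))"
    and "H \<equiv> (\<lambda>x t. \<alpha> * lap (\<lambda>y s. ln (f y s)) x t
                     + \<beta> * (norm (grad (\<lambda>y s. ln (f y s)) x t))\<^sup>2
                     + c * exp (ln (f x t) * (p - 1)) + \<phi> x t)"
  shows "\<forall>x t. 0 \<le> t \<longrightarrow>
    dt H x t = lap H x t + 2 * (grad H x t \<bullet> grad u x t)
      + (p - 1) * exp (u x t * (p - 1)) * H x t
      + 2 * (\<alpha> - \<beta>) * hess_sq u x t
      + (\<alpha> * (p - 1) + \<beta> - c * p) * (p - 1) * exp (u x t * (p - 1)) * (norm (grad u x t))\<^sup>2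
      - (p - 1) * exp (u x t * (p - 1)) * \<phi> x t
      + dt \<phi> x t - lap \<phi> x t - 2 * (grad \<phi> x t \<bullet> grad u x t)"
proof (intro allI impI)
  fix x :: "real^'n" and t :: real
  assume t0: "0 \<le> t"
  obtain G where smG: "smooth_full G" and eqG: "\<And>x t. 0 \<le> t \<Longrightarrow> G x t = f x t"
    using f_smooth unfolding smooth_half_def by metis
  obtain Ph where smP: "smooth_full Ph" and eqP: "\<And>x t. 0 \<le> t \<Longrightarrow> Ph x t = \<phi> x t"
    using phi_smooth unfolding smooth_half_def by metis
  have slcs: "slc G s" if "0 \<le> s" for s
    by (rule slc.intro[OF smG]) (use f_pos eqG that in auto)
  interpret S: slc G t by (rule slcs[OF t0])
  define P where "P = (\<lambda>y. Ph y t)"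
  have fsl: "(\<lambda>y. f y s) = (\<lambda>y. G y s)" if "0 \<le> s" for s using eqG that by simp
  have Usl: "(\<lambda>y. ln (f y s)) = slc.U G s" if "0 \<le> s" for s
    using eqG that by (simp add: slc.U_def[OF slcs[OF that]])
  have Hsl: "(\<lambda>y. H y s) = slc.FF G s p \<alpha> \<beta> c (\<lambda>y. Ph y s)" if s0: "0 \<le> s" for s
  proof (rule ext)
    fix y
    have "lap (\<lambda>y s. ln (f y s)) y s = (\<Sum>j\<in>UNIV. D j (D j (slc.U G s)) y)"
      by (simp add: lap_D Usl[OF s0])
    moreover have "(norm (grad (\<lambda>y s. ln (f y s)) y s))\<^sup>2 = (\<Sum>j\<in>UNIV. (D j (slc.U G s) y)^2)"
      by (simp add: norm_grad Usl[OF s0])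
    moreover have "exp (ln (f y s) * (p - 1)) = slc.EE G s p y"
      using eqG[OF s0, of y] by (simp add: slc.EE_def[OF slcs[OF s0]] slc.U_def[OF slcs[OF s0]])
    ultimately show "H y s = slc.FF G s p \<alpha> \<beta> c (\<lambda>y. Ph y s) y"
      using eqP[OF s0, of y] by (simp add: H_def slc.FF_def[OF slcs[OF s0]])
  qed
  let ?U = "S.U"
  let ?FH = "S.FF p \<alpha> \<beta> c P"
  let ?FT = "S.FF p 1 1 1 (\<lambda>_. 0)"
  have hasP: "\<And>i y. hasD i P y (iter_pd [Some i] Ph y t)"
    using hasD_gs[OF smP, of _ "[]"] by (simp add: P_def iter_pd_def)
  have DP: "\<And>i. D i P = (\<lambda>y. iter_pd [Some i] Ph y t)" by (rule D_fun, rule hasP)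
  have dableP: "\<And>i y. dable i P y" using hasP dable_def by blast
  have dableDP: "\<And>i y. dable i (D i P) y"
    unfolding DP using hasD_gs[OF smP] dable_def by blast
  have Hsl0: "(\<lambda>y. H y t) = ?FH" using Hsl[OF t0] by (simp add: P_def)
  have usl: "(\<lambda>y. u y t) = ?U" using Usl[OF t0] by (simp add: u_def)
  have lapH: "lap H x t = (\<Sum>i\<in>UNIV. D i (D i ?FH) x)" by (simp add: lap_D Hsl0)
  have gradH: "grad H x t \<bullet> grad u x t = (\<Sum>i\<in>UNIV. D i ?FH x * D i ?U x)"
    by (simp add: grad_inner Hsl0 usl)
  have Hx: "H x t = ?FH x" using Hsl0 by metis
  have hess: "hess_sq u x t = (\<Sum>i\<in>UNIV. \<Sum>j\<in>UNIV. (D i (D j ?U) x)^2)" by (simp add: hess_D usl)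
  have normu: "(norm (grad u x t))^2 = (\<Sum>i\<in>UNIV. (D i ?U x)^2)" by (simp add: norm_grad usl)
  have expu: "exp (u x t * (p - 1)) = S.EE p x" using usl by (simp add: S.EE_def) (metis)
  have phix: "\<phi> x t = P x" using eqP[OF t0] by (simp add: P_def)
  have phisl: "(\<lambda>y. \<phi> y t) = P" using eqP[OF t0] by (simp add: P_def)
  have dtphi: "dt \<phi> x t = iter_pd [None] Ph x t"
    unfolding dt_def
    by (rule dt_eq[where K="\<lambda>s. Ph x s", OF _ t0]) (use timeD[OF smP, of "[]"] eqP in \<open>simp_all add: iter_pd_def\<close>)
  have lapphi: "lap \<phi> x t = (\<Sum>i\<in>UNIV. D i (D i P) x)" by (simp add: lap_D phisl)
  have gradphi: "grad \<phi> x t \<bullet> grad u x t = (\<Sum>i\<in>UNIV. D i P x * D i ?U x)"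
    by (simp add: grad_inner phisl usl)
  have TT: "S.TT = ?FT"
  proof (rule S.TT_FF)
    fix y
    have "dt f y t = iter_pd [None] G y t"
      unfolding dt_def
      by (rule dt_eq[where K="\<lambda>s. G y s", OF _ t0]) (use timeD[OF smG, of "[]"] eqG in \<open>simp_all add: iter_pd_def\<close>)
    moreover have "lap f y t = (\<Sum>k\<in>UNIV. S.gs [Some k, Some k] y)"
      using fsl[OF t0] by (simp add: lap_D S.D_g flip: S.g0[THEN ext])
    ultimately show "S.gs [None] y = (\<Sum>k\<in>UNIV. S.gs [Some k, Some k] y) + S.gs [] y powr p"
      using f_eq t0 eqG[OF t0, of y] by (simp add: S.gs_def iter_pd_def)
  qed
  have ip0: "iter_pd [] G = G" by (simp add: iter_pd_def)
  have swap1: "\<And>j. iter_pd [None, Some j] G = iter_pd [Some j, None] G"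
    using pd_swap[OF smG, of "[]" None _ "[]"] by simp
  have swap2: "\<And>j. iter_pd [None, Some j, Some j] G = iter_pd [Some j, Some j, None] G"
    using pd_swap[OF smG, of "[]" None _ "[Some _]"] pd_swap[OF smG, of "[Some _]" None _ "[]"] by simp
  have b0: "((\<lambda>s. G x s) has_real_derivative iter_pd [None] G x t) (at t)"
    using timeD[OF smG, of "[]"] by (simp add: iter_pd_def)
  have b1: "((\<lambda>s. iter_pd [Some j] G x s) has_real_derivative iter_pd [Some j, None] G x t) (at t)" for j
    using timeD[OF smG, of "[Some j]"] swap1[of j] by simp
  have b2: "((\<lambda>s. iter_pd [Some j, Some j] G x s) has_real_derivative iter_pd [Some j, Some j, None] G x t) (at t)" for j
    using timeD[OF smG, of "[Some j, Some j]"] swap2[of j] by simp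
  have b3: "((\<lambda>s. Ph x s) has_real_derivative iter_pd [None] Ph x t) (at t)"
    using timeD[OF smP, of "[]"] by (simp add: iter_pd_def)
  have gpos: "G x t > 0" using S.pos .
  have d1: "((\<lambda>s. iter_pd [Some j, Some j] G x s / G x s - iter_pd [Some j] G x s * iter_pd [Some j] G x s / (G x s)^2)
      has_real_derivative D j (D j S.TT) x) (at t)" for j
    unfolding S.TT_def S.Q2 unfolding S.gs_def ip0
    using gpos by (auto intro!: derivative_eq_intros b0 b1 b2 simp: field_simps power2_eq_square power3_eq_cube)
  have d2: "((\<lambda>s. (iter_pd [Some j] G x s / G x s)^2) has_real_derivative 2 * D j S.U x * D j S.TT x) (at t)" for j
    unfolding S.TT_def S.Q1 S.U1 unfolding S.gs_def ip0
    using gpos by (auto intro!: derivative_eq_intros b0 b1 b2 simp: field_simps power2_eq_square power3_eq_cube)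
  have d3: "((\<lambda>s. exp (ln (G x s) * (p - 1))) has_real_derivative S.EE p x * (S.TT x * (p - 1))) (at t)"
    unfolding S.TT_def S.EE_def S.U_def S.gs_def ip0
    using gpos by (auto intro!: derivative_eq_intros b0 b1 b2 simp: field_simps)
  define K where "K = (\<lambda>s. \<alpha> * (\<Sum>j\<in>UNIV. iter_pd [Some j, Some j] G x s / G x s - iter_pd [Some j] G x s * iter_pd [Some j] G x s / (G x s)^2)
     + \<beta> * (\<Sum>j\<in>UNIV. (iter_pd [Some j] G x s / G x s)^2) + c * exp (ln (G x s) * (p - 1)) + Ph x s)"
  have dK: "(K has_real_derivative \<alpha> * (\<Sum>j\<in>UNIV. D j (D j S.TT) x) + \<beta> * (\<Sum>j\<in>UNIV. 2 * D j S.U x * D j S.TT x)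
      + c * (S.EE p x * (S.TT x * (p - 1))) + iter_pd [None] Ph x t) (at t)"
    unfolding K_def by (intro DERIV_add DERIV_cmult DERIV_sum d1 d2 d3 b3)
  have KH: "H x s = K s" if s0: "0 \<le> s" for s
  proof -
    interpret S2: slc G s by (rule slcs[OF s0])
    have "H x s = S2.FF p \<alpha> \<beta> c (\<lambda>y. Ph y s) x" using Hsl[OF s0] by metis
    also have "\<dots> = K s" unfolding S2.FF_gs K_def S2.gs_def ip0 by simp
    finally show ?thesis .
  qed
  have dtH: "dt H x t = \<alpha> * (\<Sum>j\<in>UNIV. D j (D j S.TT) x) + \<beta> * (\<Sum>j\<in>UNIV. 2 * D j S.U x * D j S.TT x)
      + c * (S.EE p x * (S.TT x * (p - 1))) + iter_pd [None] Ph x t"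
    unfolding dt_def by (rule dt_eq[OF dK t0]) (use KH in simp)
  show "dt H x t = lap H x t + 2 * (grad H x t \<bullet> grad u x t)
      + (p - 1) * exp (u x t * (p - 1)) * H x t
      + 2 * (\<alpha> - \<beta>) * hess_sq u x t
      + (\<alpha> * (p - 1) + \<beta> - c * p) * (p - 1) * exp (u x t * (p - 1)) * (norm (grad u x t))\<^sup>2
      - (p - 1) * exp (u x t * (p - 1)) * \<phi> x t
      + dt \<phi> x t - lap \<phi> x t - 2 * (grad \<phi> x t \<bullet> grad u x t)"
  proof -
    have h0: "\<And>i y. hasD i (\<lambda>_. 0::real) y 0" by (rule hasD_const)
    have D0: "\<And>i. D i (\<lambda>_. 0::real) = (\<lambda>_. 0)" by (rule D_fun, rule hasD_const)
    have d0: "\<And>i y. dable i (\<lambda>_. 0::real) y" using h0 dable_def by blast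
    have d0': "\<And>i y. dable i (D i (\<lambda>_. 0::real)) y" unfolding D0 using d0 .
    note DDT = S.DDF[OF d0 d0', where p=p and a=1 and b=1 and c=1, unfolded D0]
    note DT = S.DF[OF d0, where p=p and a=1 and b=1 and c=1, unfolded D0]
    note DDH = S.DDF[OF dableP dableDP, where p=p and a=\<alpha> and b=\<beta> and c=c]
    note DH = S.DF[OF dableP, where p=p and a=\<alpha> and b=\<beta> and c=c]
    note fa = final_alg[where uc="\<lambda>a b c. D a (D b (D c S.U)) x" and \<alpha>="\<alpha>" and ud="\<lambda>i j. D i (D i (D j (D j S.U))) x"
        and ub="\<lambda>i j. D i (D j S.U) x" and ua="\<lambda>j. D j S.U x" and e="S.EE p x" and p=p and \<beta>=\<beta> and c=c
        and Pt="iter_pd [None] Ph x t"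
        and pb="\<lambda>i. D i (D i P) x" and pa="\<lambda>i. D i P x" and pz="P x", OF S.U3_comm[THEN fun_cong]]
    show ?thesis
      unfolding dtH TT lapH gradH Hx hess normu expu phix dtphi lapphi gradphi
      unfolding DDT DDH
      unfolding DT DH
      using fa by (simp add: S.FF_def)
  qed
qed



end
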